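(* Let $(X,\Sigma)$ be a random pair valued in $\mathcal{X}\times\mathfrak{S}_n$ with $X\sim\mu$. Let $\mathcal{P}=\{\mathcal{C}_1,\dots,\mathcal{C}_K\}$ be a partition of $\mathcal{X}$ into $K\ge1$ measurable cells with $\mu(\mathcal{C}_k)>0$ for all $k$. Let $\mathcal{S}_{\mathcal{P}}$ be the set of rules of the form $s_{\mathcal{P},\bar\sigma}(x)=\sum_{k=1}^K\sigma_k\,\mathbb{I}\{x\in\mathcal{C}_k\}$ with $\bar\sigma=(\sigma_1,\dots,\sigma_K)\in\mathfrak{S}_n^K$. Then the set of minimizers of $\mathcal{R}$ over $\mathcal{S}_{\mathcal{P}}$ consists exactly of the rules $s_{\mathcal{P},\bar\sigma}$ such that, for every $k\in\{1,\dots,K\}$, $\sigma_k$ is a Kemeny median of $P_{\mathcal{C}_k}$. Moreover, $$\min_{s\in\mathcal{S}_{\mathcal{P}}}\mathcal{R}(s)=\sum_{k=1}^K\mu(\mathcal{C}_k)L^*_{P_{\mathcal{C}_k}}.$$ If in addition $P_{\mathcal{C}_k}\in\mathcal{T}$ for $1\le k\le K$, the risk minimizer over $\mathcal{S}_{\mathcal{P}}$ is unique and is given by $s^*_{\mathcal{P}}(x)=\sum_{k=1}^K\sigma^*_{P_{\mathcal{C}_k}}\,\mathbb{I}\{x\in\mathcal{C}_k\}$.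
   Context: $\mathfrak{S}_n$ is the set of permutations of $\{1,\dots,n\}$. The Kendall $\tau$ distance is $d_\tau(\sigma,\sigma')=\sum_{i<j}\mathbb{I}\{(\sigma(i)-\sigma(j))(\sigma'(i)-\sigma'(j))<0\}$. For a distribution $P$ on $\mathfrak{S}_n$: $L_P(\sigma)=\mathbb{E}_{\Sigma\sim P}[d_\tau(\Sigma,\sigma)]$, $L_P^*=\min_\sigma L_P(\sigma)$, and a Kemeny median of $P$ is any minimizer of $L_P$. For a measurable set $\mathcal{C}$ with $\mu(\mathcal{C})>0$, $P_{\mathcal{C}}$ is the conditional distribution of $\Sigma$ given $X\in\mathcal{C}$. $\mathcal{T}$ is the set of strictly stochastically transitive distributions. These are the $P$ whose pairwise probabilities $p_{i,j}=\mathbb{P}_{\Sigma\sim P}\{\Sigma(i)<\Sigma(j)\}$ satisfy (a) $p_{i,j}\ge1/2$ and $p_{j,k}\ge1/2\Rightarrow p_{i,k}\ge1/2$, and (b) $p_{i,j}\ne1/2$ for all $i<j$. For $P\in\mathcal{T}$ the Kemeny median is unique, denoted $\sigma^*_P$. The risk of a measurable rule $s:\mathcal{X}\to\mathfrak{S}_n$ is $\mathcal{R}(s)=\mathbb{E}[d_\tau(s(X),\Sigma)]$. *)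

theory Defs
  imports "HOL-Probability.Probability"
begin

definition perms :: "nat \<Rightarrow> (nat \<Rightarrow> nat) set" where
  "perms n = {\<sigma>. \<sigma> permutes {1..n}}"

definition kendall :: "nat \<Rightarrow> (nat \<Rightarrow> nat) \<Rightarrow> (nat \<Rightarrow> nat) \<Rightarrow> nat" where
  "kendall n \<sigma> \<sigma>' = card {(i, j). 1 \<le> i \<and> i < j \<and> j \<le> n \<and>
      (int (\<sigma> i) - int (\<sigma> j)) * (int (\<sigma>' i) - int (\<sigma>' j)) < 0}"

text \<open>A distribution on the permutations of {1..n} is given by its mass function P.\<close>
definition L_risk :: "nat \<Rightarrow> ((nat \<Rightarrow> nat) \<Rightarrow> real) \<Rightarrow> (nat \<Rightarrow> nat) \<Rightarrow> real" where
  "L_risk n P \<sigma> = (\<Sum>\<sigma>'\<in>perms n. P \<sigma>' * real (kendall n \<sigma>' \<sigma>))"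

definition L_star :: "nat \<Rightarrow> ((nat \<Rightarrow> nat) \<Rightarrow> real) \<Rightarrow> real" where
  "L_star n P = Min (L_risk n P ` perms n)"

definition kemeny_median :: "nat \<Rightarrow> ((nat \<Rightarrow> nat) \<Rightarrow> real) \<Rightarrow> (nat \<Rightarrow> nat) \<Rightarrow> bool" where
  "kemeny_median n P \<sigma> \<longleftrightarrow> \<sigma> \<in> perms n \<and> (\<forall>\<sigma>'\<in>perms n. L_risk n P \<sigma> \<le> L_risk n P \<sigma>')"

definition pairwise_prob :: "nat \<Rightarrow> ((nat \<Rightarrow> nat) \<Rightarrow> real) \<Rightarrow> nat \<Rightarrow> nat \<Rightarrow> real" where
  "pairwise_prob n P i j = (\<Sum>\<sigma>\<in>{\<sigma>\<in>perms n. \<sigma> i < \<sigma> j}. P \<sigma>)"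

text \<open>Strict stochastic transitivity (the class T).\<close>
definition SST :: "nat \<Rightarrow> ((nat \<Rightarrow> nat) \<Rightarrow> real) \<Rightarrow> bool" where
  "SST n P \<longleftrightarrow>
     (\<forall>i\<in>{1..n}. \<forall>j\<in>{1..n}. \<forall>k\<in>{1..n}.
        pairwise_prob n P i j \<ge> 1/2 \<and> pairwise_prob n P j k \<ge> 1/2 \<longrightarrow> pairwise_prob n P i k \<ge> 1/2)
   \<and> (\<forall>i\<in>{1..n}. \<forall>j\<in>{1..n}. i < j \<longrightarrow> pairwise_prob n P i j \<noteq> 1/2)"

text \<open>The unique Kemeny median of P (for P in T).\<close>
definition sigma_star :: "nat \<Rightarrow> ((nat \<Rightarrow> nat) \<Rightarrow> real) \<Rightarrow> (nat \<Rightarrow> nat)" where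
  "sigma_star n P = (THE \<sigma>. kemeny_median n P \<sigma>)"

definition cond_dist :: "'w measure \<Rightarrow> ('w \<Rightarrow> 'x) \<Rightarrow> ('w \<Rightarrow> (nat \<Rightarrow> nat)) \<Rightarrow> 'x set
     \<Rightarrow> (nat \<Rightarrow> nat) \<Rightarrow> real" where
  "cond_dist M X Sig C \<sigma> =
     measure M {\<omega>\<in>space M. X \<omega> \<in> C \<and> Sig \<omega> = \<sigma>} / measure M {\<omega>\<in>space M. X \<omega> \<in> C}"

definition risk :: "nat \<Rightarrow> 'w measure \<Rightarrow> ('w \<Rightarrow> 'x) \<Rightarrow> ('w \<Rightarrow> (nat \<Rightarrow> nat))
     \<Rightarrow> ('x \<Rightarrow> (nat \<Rightarrow> nat)) \<Rightarrow> real" where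
  "risk n M X Sig s = (\<integral>\<omega>. real (kendall n (s (X \<omega>)) (Sig \<omega>)) \<partial>M)"

text \<open>Piecewise constant rule: s(x) = sigma_k if x in C_k (k in {1..K});
  points lying in no cell (i.e. outside the feature space) are sent to id.\<close>
definition piecewise_rule :: "(nat \<Rightarrow> 'x set) \<Rightarrow> nat \<Rightarrow> (nat \<Rightarrow> (nat \<Rightarrow> nat))
     \<Rightarrow> 'x \<Rightarrow> (nat \<Rightarrow> nat)" where
  "piecewise_rule C K sbar x =
     (if \<exists>k\<in>{1..K}. x \<in> C k then sbar (THE k. k \<in> {1..K} \<and> x \<in> C k) else id)"

definition rule_class :: "nat \<Rightarrow> (nat \<Rightarrow> 'x set) \<Rightarrow> nat \<Rightarrow> ('x \<Rightarrow> (nat \<Rightarrow> nat)) set" where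
  "rule_class n C K = {piecewise_rule C K sbar | sbar. \<forall>k\<in>{1..K}. sbar k \<in> perms n}"

end

theory Submission
  imports Defs
begin


lemma perms_finite: "finite (perms n)"
proof -
  have "perms n = {p. p permutes {1..n}}" by (simp add: perms_def)
  thus ?thesis using finite_permutations[of "{1..n}"] by simp
qed

lemma id_perms: "id \<in> perms n" by (simp add: perms_def permutes_id)

lemma kendall_sym: "kendall n a b = kendall n b a"
  unfolding kendall_def by (simp add: mult.commute)

definition pairs :: "nat \<Rightarrow> (nat \<times> nat) set" where
  "pairs n = {(i, j). 1 \<le> i \<and> i < j \<and> j \<le> n}"

lemma pairs_finite: "finite (pairs n)"
  by (rule finite_subset[of _ "{1..n} \<times> {1..n}"]) (auto simp: pairs_def)

lemma perm_inj: "\<sigma> \<in> perms n \<Longrightarrow> i \<noteq> j \<Longrightarrow> \<sigma> i \<noteq> \<sigma> j"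
  unfolding perms_def by (metis mem_Collect_eq permutes_inj injD)

lemma sign_lem:
  fixes x y u v :: nat
  assumes "x \<noteq> y" "u \<noteq> v"
  shows "(int x - int y) * (int u - int v) < 0 \<longleftrightarrow> (x < y) \<noteq> (u < v)"
proof (cases "x < y"; cases "u < v")
  assume "x < y" "u < v" thus ?thesis by (simp add: mult_less_0_iff)
next
  assume "x < y" "\<not> u < v" thus ?thesis using assms by (simp add: mult_less_0_iff)
next
  assume "\<not> x < y" "u < v" thus ?thesis using assms by (simp add: mult_less_0_iff)
next
  assume "\<not> x < y" "\<not> u < v" thus ?thesis using assms by (simp add: mult_less_0_iff)
qed

lemma kendall_pairs:
  assumes "\<sigma>' \<in> perms n" "\<sigma> \<in> perms n"
  shows "real (kendall n \<sigma>' \<sigma>) =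
    (\<Sum>x\<in>pairs n. if (\<sigma>' (fst x) < \<sigma>' (snd x)) \<noteq> (\<sigma> (fst x) < \<sigma> (snd x)) then 1 else 0)"
proof -
  have "{(i, j). 1 \<le> i \<and> i < j \<and> j \<le> n \<and>
      (int (\<sigma>' i) - int (\<sigma>' j)) * (int (\<sigma> i) - int (\<sigma> j)) < 0}
     = {x \<in> pairs n. (\<sigma>' (fst x) < \<sigma>' (snd x)) \<noteq> (\<sigma> (fst x) < \<sigma> (snd x))}"
    using perm_inj[OF assms(1)] perm_inj[OF assms(2)]
    by (auto simp: pairs_def sign_lem)
  hence "kendall n \<sigma>' \<sigma> = card {x \<in> pairs n. (\<sigma>' (fst x) < \<sigma>' (snd x)) \<noteq> (\<sigma> (fst x) < \<sigma> (snd x))}"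
    unfolding kendall_def by simp
  also have "real \<dots> = (\<Sum>x\<in>{x \<in> pairs n. (\<sigma>' (fst x) < \<sigma>' (snd x)) \<noteq> (\<sigma> (fst x) < \<sigma> (snd x))}. 1)"
    by simp
  also have "\<dots> = (\<Sum>x\<in>pairs n. if (\<sigma>' (fst x) < \<sigma>' (snd x)) \<noteq> (\<sigma> (fst x) < \<sigma> (snd x)) then 1 else 0)"
    by (rule sum.inter_filter[OF pairs_finite])
  finally show ?thesis .
qed

lemma pp_filter: "pairwise_prob n P i j = (\<Sum>\<sigma>\<in>perms n. if \<sigma> i < \<sigma> j then P \<sigma> else 0)"
  unfolding pairwise_prob_def by (rule sum.inter_filter[OF perms_finite])

lemma pp_compl:
  assumes "sum P (perms n) = 1"
  shows "(\<Sum>\<sigma>\<in>perms n. if \<sigma> i < \<sigma> j then 0 else P \<sigma>) = 1 - pairwise_prob n P i j"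
proof -
  have "(\<Sum>\<sigma>\<in>perms n. if \<sigma> i < \<sigma> j then 0 else P \<sigma>) + pairwise_prob n P i j = sum P (perms n)"
    unfolding pp_filter sum.distrib[symmetric] by (rule sum.cong) auto
  thus ?thesis using assms by simp
qed

lemma pp_swap:
  assumes "sum P (perms n) = 1" "i \<noteq> j"
  shows "pairwise_prob n P j i = 1 - pairwise_prob n P i j"
proof -
  have "pairwise_prob n P j i = (\<Sum>\<sigma>\<in>perms n. if \<sigma> i < \<sigma> j then 0 else P \<sigma>)"
    unfolding pp_filter
  proof (intro sum.cong refl)
    fix \<sigma> assume "\<sigma> \<in> perms n"
    hence "\<sigma> i \<noteq> \<sigma> j" using perm_inj assms(2) by blast
    thus "(if \<sigma> j < \<sigma> i then P \<sigma> else 0) = (if \<sigma> i < \<sigma> j then 0 else P \<sigma>)" by auto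
  qed
  thus ?thesis using pp_compl[OF assms(1)] by simp
qed

lemma pp_self: "pairwise_prob n P i i = 0"
  unfolding pp_filter by simp

definition tm :: "nat \<Rightarrow> ((nat \<Rightarrow> nat) \<Rightarrow> real) \<Rightarrow> (nat \<Rightarrow> nat) \<Rightarrow> nat \<times> nat \<Rightarrow> real" where
  "tm n P \<sigma> x = (if \<sigma> (fst x) < \<sigma> (snd x) then 1 - pairwise_prob n P (fst x) (snd x)
                   else pairwise_prob n P (fst x) (snd x))"

lemma L_risk_pairs:
  assumes "sum P (perms n) = 1" "\<sigma> \<in> perms n"
  shows "L_risk n P \<sigma> = (\<Sum>x\<in>pairs n. tm n P \<sigma> x)"
proof -
  have "L_risk n P \<sigma> = (\<Sum>\<sigma>'\<in>perms n. \<Sum>x\<in>pairs n. P \<sigma>' *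
      (if (\<sigma>' (fst x) < \<sigma>' (snd x)) \<noteq> (\<sigma> (fst x) < \<sigma> (snd x)) then 1 else 0))"
    unfolding L_risk_def
    by (intro sum.cong refl) (simp add: kendall_pairs[OF _ assms(2)] sum_distrib_left)
  also have "\<dots> = (\<Sum>x\<in>pairs n. \<Sum>\<sigma>'\<in>perms n. P \<sigma>' *
      (if (\<sigma>' (fst x) < \<sigma>' (snd x)) \<noteq> (\<sigma> (fst x) < \<sigma> (snd x)) then 1 else 0))"
    by (rule sum.swap)
  also have "\<dots> = (\<Sum>x\<in>pairs n. tm n P \<sigma> x)"
  proof (rule sum.cong[OF refl])
    fix x assume "x \<in> pairs n"
    show "(\<Sum>\<sigma>'\<in>perms n. P \<sigma>' *
      (if (\<sigma>' (fst x) < \<sigma>' (snd x)) \<noteq> (\<sigma> (fst x) < \<sigma> (snd x)) then 1 else 0)) = tm n P \<sigma> x"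
    proof (cases "\<sigma> (fst x) < \<sigma> (snd x)")
      case True
      hence "(\<Sum>\<sigma>'\<in>perms n. P \<sigma>' *
        (if (\<sigma>' (fst x) < \<sigma>' (snd x)) \<noteq> (\<sigma> (fst x) < \<sigma> (snd x)) then 1 else 0))
        = (\<Sum>\<sigma>'\<in>perms n. if \<sigma>' (fst x) < \<sigma>' (snd x) then 0 else P \<sigma>')"
        by (intro sum.cong) auto
      then show ?thesis using True pp_compl[OF assms(1)] by (simp add: tm_def)
    next
      case False
      hence "(\<Sum>\<sigma>'\<in>perms n. P \<sigma>' *
        (if (\<sigma>' (fst x) < \<sigma>' (snd x)) \<noteq> (\<sigma> (fst x) < \<sigma> (snd x)) then 1 else 0))
        = (\<Sum>\<sigma>'\<in>perms n. if \<sigma>' (fst x) < \<sigma>' (snd x) then P \<sigma>' else 0)"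
        by (intro sum.cong) auto
      then show ?thesis using False by (simp add: tm_def pp_filter)
    qed
  qed
  finally show ?thesis .
qed

lemma perm_rank:
  assumes "\<sigma> \<in> perms n" "i \<in> {1..n}"
  shows "\<sigma> i = Suc (card {j\<in>{1..n}. \<sigma> j < \<sigma> i})"
proof -
  have p: "\<sigma> permutes {1..n}" using assms(1) by (simp add: perms_def)
  have si: "\<sigma> i \<in> {1..n}" using permutes_in_image[OF p, of i] assms(2) by blast
  have "\<sigma> ` {j\<in>{1..n}. \<sigma> j < \<sigma> i} = {m\<in>{1..n}. m < \<sigma> i}"
  proof
    show "\<sigma> ` {j\<in>{1..n}. \<sigma> j < \<sigma> i} \<subseteq> {m\<in>{1..n}. m < \<sigma> i}"
      using permutes_in_image[OF p] by auto
    show "{m\<in>{1..n}. m < \<sigma> i} \<subseteq> \<sigma> ` {j\<in>{1..n}. \<sigma> j < \<sigma> i}"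
    proof
      fix m assume m: "m \<in> {m\<in>{1..n}. m < \<sigma> i}"
      hence "m \<in> \<sigma> ` {1..n}" using permutes_image[OF p] by simp
      then obtain j where "j \<in> {1..n}" "m = \<sigma> j" by blast
      thus "m \<in> \<sigma> ` {j\<in>{1..n}. \<sigma> j < \<sigma> i}" using m by auto
    qed
  qed
  also have "\<dots> = {1..<\<sigma> i}" using si by auto
  finally have "card (\<sigma> ` {j\<in>{1..n}. \<sigma> j < \<sigma> i}) = \<sigma> i - 1" by simp
  moreover have "inj_on \<sigma> {j\<in>{1..n}. \<sigma> j < \<sigma> i}" using permutes_inj_on[OF p] by blast
  ultimately have "card {j\<in>{1..n}. \<sigma> j < \<sigma> i} = \<sigma> i - 1" by (simp add: card_image)
  thus ?thesis using si by simp
qed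

lemma perm_eq_order:
  assumes "\<sigma> \<in> perms n" "\<tau> \<in> perms n"
    and ord: "\<And>i j. i \<in> {1..n} \<Longrightarrow> j \<in> {1..n} \<Longrightarrow> i < j \<Longrightarrow> (\<sigma> i < \<sigma> j) = (\<tau> i < \<tau> j)"
  shows "\<sigma> = \<tau>"
proof
  fix i
  show "\<sigma> i = \<tau> i"
  proof (cases "i \<in> {1..n}")
    case True
    have ord2: "(\<sigma> j < \<sigma> i) = (\<tau> j < \<tau> i)" if "j \<in> {1..n}" for j
    proof -
      consider "j < i" | "j = i" | "i < j" by arith
      thus ?thesis
      proof cases
        case 1 thus ?thesis using ord[OF that True] by simp
      next
        case 2 thus ?thesis by simp
      next
        case 3
        have a: "(\<sigma> i < \<sigma> j) = (\<tau> i < \<tau> j)" using ord[OF True that 3] .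
        have "\<sigma> i \<noteq> \<sigma> j" "\<tau> i \<noteq> \<tau> j" using perm_inj assms(1,2) 3 by auto
        thus ?thesis using a by auto
      qed
    qed
    have "{j\<in>{1..n}. \<sigma> j < \<sigma> i} = {j\<in>{1..n}. \<tau> j < \<tau> i}" using ord2 by auto
    thus ?thesis using perm_rank[OF assms(1) True] perm_rank[OF assms(2) True] by simp
  next
    case False
    thus ?thesis using assms(1,2) by (simp add: perms_def permutes_not_in)
  qed
qed

lemma kemeny_unique:
  assumes sum1: "sum P (perms n) = 1" and sst: "SST n P"
  shows "\<exists>!\<sigma>. kemeny_median n P \<sigma>"
proof -
  define p where "p = pairwise_prob n P"
  define R where "R = (\<lambda>i j. p i j > 1/2)"
  have swap: "p j i = 1 - p i j" if "i \<noteq> j" for i j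
    using pp_swap[OF sum1 that] by (simp add: p_def)
  have self: "p i i = 0" for i by (simp add: p_def pp_self)
  have sstA: "\<And>i j k. i\<in>{1..n} \<Longrightarrow> j\<in>{1..n} \<Longrightarrow> k\<in>{1..n} \<Longrightarrow>
        p i j \<ge> 1/2 \<Longrightarrow> p j k \<ge> 1/2 \<Longrightarrow> p i k \<ge> 1/2"
    using sst unfolding SST_def p_def by blast
  have sstB: "\<And>i j. i\<in>{1..n} \<Longrightarrow> j\<in>{1..n} \<Longrightarrow> i < j \<Longrightarrow> p i j \<noteq> 1/2"
    using sst unfolding SST_def p_def by blast
  have nh: "p i j \<noteq> 1/2" if "i \<in> {1..n}" "j \<in> {1..n}" "i \<noteq> j" for i j
  proof (cases "i < j")
    case True thus ?thesis using sstB that by simp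
  next
    case False
    hence "j < i" using that by simp
    hence "p j i \<noteq> 1/2" using sstB that by simp
    thus ?thesis using swap[OF that(3)] by simp
  qed
  have irr: "\<not> R i i" for i by (simp add: R_def self)
  have tot: "R i j \<or> R j i" if "i \<in> {1..n}" "j \<in> {1..n}" "i \<noteq> j" for i j
    using nh[OF that] swap[OF that(3)] unfolding R_def by auto
  have asym: "\<not> R j i" if "R i j" for i j
  proof (cases "i = j")
    case True thus ?thesis using irr by simp
  next
    case False thus ?thesis using that swap[OF False] unfolding R_def by auto
  qed
  have trans: "R i k" if "i \<in> {1..n}" "j \<in> {1..n}" "k \<in> {1..n}" "R i j" "R j k" for i j k
  proof -
    have "p i k \<ge> 1/2" using sstA[OF that(1-3)] that(4,5) unfolding R_def by simp
    moreover have "i \<noteq> k" using that asym by blast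
    ultimately show ?thesis using nh[OF that(1,3)] unfolding R_def by auto
  qed
  define rk where "rk = (\<lambda>i. card {j\<in>{1..n}. R j i})"
  define s0 where "s0 = (\<lambda>i. if i \<in> {1..n} then Suc (rk i) else i)"
  have rk_less: "rk i < rk k" if "i \<in> {1..n}" "k \<in> {1..n}" "R i k" for i k
  proof -
    have "{j\<in>{1..n}. R j i} \<subset> {j\<in>{1..n}. R j k}"
      using trans[OF _ that(1,2) _ that(3)] that irr by blast
    thus ?thesis unfolding rk_def by (intro psubset_card_mono) auto
  qed
  have s0_ord: "(s0 i < s0 j) = R i j" if "i \<in> {1..n}" "j \<in> {1..n}" "i \<noteq> j" for i j
    using rk_less[OF that(1,2)] rk_less[OF that(2,1)] tot[OF that] that unfolding s0_def by auto
  have s0_range: "s0 i \<in> {1..n}" if "i \<in> {1..n}" for i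
  proof -
    have "{j\<in>{1..n}. R j i} \<subseteq> {1..n} - {i}" using irr by auto
    hence "rk i \<le> card ({1..n} - {i})" unfolding rk_def by (intro card_mono) auto
    also have "\<dots> = n - 1" using that by simp
    finally show ?thesis using that unfolding s0_def by auto
  qed
  have s0_inj: "inj_on s0 {1..n}"
  proof (rule inj_onI, rule ccontr)
    fix i j assume "i \<in> {1..n}" "j \<in> {1..n}" "s0 i = s0 j" "i \<noteq> j"
    hence "R i j \<or> R j i" using tot by blast
    thus False using s0_ord \<open>s0 i = s0 j\<close> \<open>i \<in> {1..n}\<close> \<open>j \<in> {1..n}\<close> \<open>i \<noteq> j\<close>
      by (metis less_irrefl)
  qed
  have "s0 ` {1..n} = {1..n}"
    by (rule endo_inj_surj) (use s0_range s0_inj in auto)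
  hence "bij_betw s0 {1..n} {1..n}" using s0_inj by (simp add: bij_betw_def)
  hence s0p: "s0 \<in> perms n"
    unfolding perms_def by (auto intro!: bij_imp_permutes simp: s0_def)
  have tm_le: "tm n P s0 x \<le> tm n P \<sigma> x" and
       tm_eq: "tm n P s0 x = tm n P \<sigma> x \<Longrightarrow> (s0 (fst x) < s0 (snd x)) = (\<sigma> (fst x) < \<sigma> (snd x))"
    if xp: "x \<in> pairs n" "\<sigma> \<in> perms n" for x \<sigma>
  proof -
    obtain i j where x: "x = (i, j)" "i \<in> {1..n}" "j \<in> {1..n}" "i < j"
      using xp(1) unfolding pairs_def by (cases x) auto
    have ij: "i \<noteq> j" using x by simp
    have o: "(s0 i < s0 j) = (p i j > 1/2)" using s0_ord[OF x(2,3) ij] by (simp add: R_def)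
    have "p i j \<noteq> 1/2" using nh[OF x(2,3) ij] .
    then show "tm n P s0 x \<le> tm n P \<sigma> x"
      using o unfolding tm_def x p_def by auto
    show "(s0 (fst x) < s0 (snd x)) = (\<sigma> (fst x) < \<sigma> (snd x))" if "tm n P s0 x = tm n P \<sigma> x"
      using o that \<open>p i j \<noteq> 1/2\<close> unfolding tm_def x p_def by (auto split: if_splits)
  qed
  have med: "kemeny_median n P s0"
    unfolding kemeny_median_def
    using s0p L_risk_pairs[OF sum1] tm_le by (auto intro!: sum_mono)
  moreover have "\<sigma> = s0" if "kemeny_median n P \<sigma>" for \<sigma>
  proof -
    have sp: "\<sigma> \<in> perms n" using that by (simp add: kemeny_median_def)
    have le: "L_risk n P \<sigma> \<le> L_risk n P s0" using that s0p by (simp add: kemeny_median_def)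
    have eq: "tm n P s0 x = tm n P \<sigma> x" if "x \<in> pairs n" for x
    proof (rule ccontr)
      assume "tm n P s0 x \<noteq> tm n P \<sigma> x"
      hence "tm n P s0 x < tm n P \<sigma> x" using tm_le[OF that sp] by simp
      hence "(\<Sum>x\<in>pairs n. tm n P s0 x) < (\<Sum>x\<in>pairs n. tm n P \<sigma> x)"
        using tm_le[OF _ sp] that by (intro sum_strict_mono_ex1[OF pairs_finite]) auto
      thus False using le L_risk_pairs[OF sum1 sp] L_risk_pairs[OF sum1 s0p] by simp
    qed
    show ?thesis
    proof (rule perm_eq_order[OF sp s0p])
      fix i j assume "i \<in> {1..n}" "j \<in> {1..n}" "i < j"
      hence "(i, j) \<in> pairs n" by (auto simp: pairs_def)
      from tm_eq[OF this sp eq[OF this]] show "(\<sigma> i < \<sigma> j) = (s0 i < s0 j)" by simp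
    qed
  qed
  ultimately show ?thesis by blast
qed



lemma pw_eval:
  assumes disj: "\<And>k l. k \<in> {1..K} \<Longrightarrow> l \<in> {1..K} \<Longrightarrow> k \<noteq> l \<Longrightarrow> C k \<inter> C l = {}"
    and "k0 \<in> {1..K}" "x \<in> C k0"
  shows "piecewise_rule C K sbar x = sbar k0"
proof -
  have "(THE k. k \<in> {1..K} \<and> x \<in> C k) = k0"
    using assms by (intro the_equality) blast+
  thus ?thesis using assms unfolding piecewise_rule_def by auto
qed

lemma pw_cong:
  assumes disj: "\<And>k l. k \<in> {1..K} \<Longrightarrow> l \<in> {1..K} \<Longrightarrow> k \<noteq> l \<Longrightarrow> C k \<inter> C l = {}"
    and "\<And>k. k \<in> {1..K} \<Longrightarrow> a k = b k"
  shows "piecewise_rule C K a = piecewise_rule C K b"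
proof
  fix x
  show "piecewise_rule C K a x = piecewise_rule C K b x"
  proof (cases "\<exists>k\<in>{1..K}. x \<in> C k")
    case True
    then obtain k where "k \<in> {1..K}" "x \<in> C k" by blast
    thus ?thesis using pw_eval[of K C, OF disj] assms(2) by metis
  next
    case False thus ?thesis unfolding piecewise_rule_def by simp
  qed
qed

lemma cond_sum1:
  assumes "prob_space M" "X \<in> M \<rightarrow>\<^sub>M N" "Sig \<in> M \<rightarrow>\<^sub>M count_space (perms n)"
    and "Ck \<in> sets N" "measure M {\<omega>\<in>space M. X \<omega> \<in> Ck} > 0"
  shows "sum (cond_dist M X Sig Ck) (perms n) = 1"
proof -
  interpret prob_space M by fact
  define A where "A = (\<lambda>\<sigma>. {\<omega>\<in>space M. X \<omega> \<in> Ck \<and> Sig \<omega> = \<sigma>})"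
  have Am: "A \<sigma> \<in> sets M" if "\<sigma> \<in> perms n" for \<sigma>
  proof -
    have "A \<sigma> = (X -` Ck \<inter> space M) \<inter> (Sig -` {\<sigma>} \<inter> space M)" by (auto simp: A_def)
    moreover have "X -` Ck \<inter> space M \<in> sets M" using measurable_sets[OF assms(2,4)] .
    moreover have "Sig -` {\<sigma>} \<inter> space M \<in> sets M" using measurable_sets[OF assms(3)] that by simp
    ultimately show ?thesis by simp
  qed
  have "(\<Union>\<sigma>\<in>perms n. A \<sigma>) = {\<omega>\<in>space M. X \<omega> \<in> Ck}"
    using measurable_space[OF assms(3)] by (auto simp: A_def)
  moreover have "measure M (\<Union>\<sigma>\<in>perms n. A \<sigma>) = (\<Sum>\<sigma>\<in>perms n. measure M (A \<sigma>))"
    using Am by (intro measure_finite_Union perms_finite) (auto simp: disjoint_family_on_def A_def)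
  ultimately have "(\<Sum>\<sigma>\<in>perms n. measure M (A \<sigma>)) = measure M {\<omega>\<in>space M. X \<omega> \<in> Ck}" by simp
  thus ?thesis using assms(5) unfolding cond_dist_def A_def sum_divide_distrib[symmetric] by simp
qed

lemma risk_formula:
  assumes "prob_space M"
    and X: "X \<in> M \<rightarrow>\<^sub>M N"
    and S: "Sig \<in> M \<rightarrow>\<^sub>M count_space (perms n)"
    and Cs: "\<And>k. k \<in> {1..K} \<Longrightarrow> C k \<in> sets N"
    and disj: "\<And>k l. k \<in> {1..K} \<Longrightarrow> l \<in> {1..K} \<Longrightarrow> k \<noteq> l \<Longrightarrow> C k \<inter> C l = {}"
    and cov: "(\<Union>k\<in>{1..K}. C k) = space N"
    and pos: "\<And>k. k \<in> {1..K} \<Longrightarrow> measure (distr M N X) (C k) > 0"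
  shows "risk n M X Sig (piecewise_rule C K sbar) =
     (\<Sum>k\<in>{1..K}. measure (distr M N X) (C k) * L_risk n (cond_dist M X Sig (C k)) (sbar k))"
proof -
  interpret prob_space M by fact
  define A where "A = (\<lambda>k \<sigma>. {\<omega>\<in>space M. X \<omega> \<in> C k \<and> Sig \<omega> = \<sigma>})"
  have Am: "A k \<sigma> \<in> sets M" if "k \<in> {1..K}" "\<sigma> \<in> perms n" for k \<sigma>
  proof -
    have "A k \<sigma> = (X -` C k \<inter> space M) \<inter> (Sig -` {\<sigma>} \<inter> space M)" by (auto simp: A_def)
    moreover have "X -` C k \<inter> space M \<in> sets M" using measurable_sets[OF X Cs[OF that(1)]] .
    moreover have "Sig -` {\<sigma>} \<inter> space M \<in> sets M" using measurable_sets[OF S] that by simp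
    ultimately show ?thesis by simp
  qed
  define f where "f = (\<lambda>\<omega>. \<Sum>k\<in>{1..K}. \<Sum>\<sigma>\<in>perms n.
      indicator (A k \<sigma>) \<omega> * real (kendall n (sbar k) \<sigma>))"
  have pt: "real (kendall n (piecewise_rule C K sbar (X \<omega>)) (Sig \<omega>)) = f \<omega>" if w: "\<omega> \<in> space M" for \<omega>
  proof -
    have "X \<omega> \<in> space N" using measurable_space[OF X w] .
    then obtain k0 where k0: "k0 \<in> {1..K}" "X \<omega> \<in> C k0" using cov by blast
    have sp: "Sig \<omega> \<in> perms n" using measurable_space[OF S w] by simp
    have inner: "(\<Sum>\<sigma>\<in>perms n. indicator (A k \<sigma>) \<omega> * real (kendall n (sbar k) \<sigma>))
        = (if k = k0 then real (kendall n (sbar k0) (Sig \<omega>)) else 0)" if k: "k \<in> {1..K}" for k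
    proof (cases "k = k0")
      case True
      have "(\<Sum>\<sigma>\<in>perms n. indicator (A k \<sigma>) \<omega> * real (kendall n (sbar k) \<sigma>))
          = (\<Sum>\<sigma>\<in>perms n. if \<sigma> = Sig \<omega> then real (kendall n (sbar k) \<sigma>) else 0)"
        using True k0 w by (intro sum.cong) (auto simp: A_def indicator_def)
      also have "\<dots> = real (kendall n (sbar k) (Sig \<omega>))"
        using sp perms_finite by (simp add: sum.delta')
      finally show ?thesis using True by simp
    next
      case False
      hence "X \<omega> \<notin> C k" using disj[OF k k0(1) False] k0 by blast
      thus ?thesis using False by (simp add: A_def indicator_def)
    qed
    have "f \<omega> = (\<Sum>k\<in>{1..K}. if k = k0 then real (kendall n (sbar k0) (Sig \<omega>)) else 0)"
      unfolding f_def using inner by (intro sum.cong) auto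
    also have "\<dots> = real (kendall n (sbar k0) (Sig \<omega>))" using k0 by simp
    finally show ?thesis using pw_eval[of K C, OF disj k0] by simp
  qed
  have "risk n M X Sig (piecewise_rule C K sbar) = integral\<^sup>L M f"
    unfolding risk_def by (rule Bochner_Integration.integral_cong[OF refl pt])
  also have "\<dots> = (\<Sum>k\<in>{1..K}. \<Sum>\<sigma>\<in>perms n. measure M (A k \<sigma>) * real (kendall n (sbar k) \<sigma>))"
  proof -
    have int: "integrable M (\<lambda>\<omega>. indicator (A k \<sigma>) \<omega> * real (kendall n (sbar k) \<sigma>))"
      if "k \<in> {1..K}" "\<sigma> \<in> perms n" for k \<sigma>
      using Am[OF that] by (intro integrable_mult_left integrable_real_indicator)
         (auto simp: less_top[symmetric])
    have "integral\<^sup>L M f = (\<Sum>k\<in>{1..K}. integral\<^sup>L M (\<lambda>\<omega>. \<Sum>\<sigma>\<in>perms n.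
        indicator (A k \<sigma>) \<omega> * real (kendall n (sbar k) \<sigma>)))"
      unfolding f_def using int by (intro Bochner_Integration.integral_sum) (auto intro!: Bochner_Integration.integrable_sum)
    also have "\<dots> = (\<Sum>k\<in>{1..K}. \<Sum>\<sigma>\<in>perms n. measure M (A k \<sigma>) * real (kendall n (sbar k) \<sigma>))"
    proof (rule sum.cong[OF refl])
      fix k assume k: "k \<in> {1..K}"
      have "integral\<^sup>L M (\<lambda>\<omega>. \<Sum>\<sigma>\<in>perms n. indicator (A k \<sigma>) \<omega> * real (kendall n (sbar k) \<sigma>))
        = (\<Sum>\<sigma>\<in>perms n. integral\<^sup>L M (\<lambda>\<omega>. indicator (A k \<sigma>) \<omega> * real (kendall n (sbar k) \<sigma>)))"
        using int k by (intro Bochner_Integration.integral_sum) auto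
      also have "\<dots> = (\<Sum>\<sigma>\<in>perms n. measure M (A k \<sigma>) * real (kendall n (sbar k) \<sigma>))"
      proof (rule sum.cong[OF refl])
        fix \<sigma> assume "\<sigma> \<in> perms n"
        have "A k \<sigma> \<inter> space M = A k \<sigma>" by (auto simp: A_def)
        thus "integral\<^sup>L M (\<lambda>\<omega>. indicator (A k \<sigma>) \<omega> * real (kendall n (sbar k) \<sigma>))
             = measure M (A k \<sigma>) * real (kendall n (sbar k) \<sigma>)"
          by simp
      qed
      finally show "integral\<^sup>L M (\<lambda>\<omega>. \<Sum>\<sigma>\<in>perms n. indicator (A k \<sigma>) \<omega> * real (kendall n (sbar k) \<sigma>))
        = (\<Sum>\<sigma>\<in>perms n. measure M (A k \<sigma>) * real (kendall n (sbar k) \<sigma>))" .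
    qed
    finally show ?thesis .
  qed
  also have "\<dots> = (\<Sum>k\<in>{1..K}. measure (distr M N X) (C k) * L_risk n (cond_dist M X Sig (C k)) (sbar k))"
  proof (rule sum.cong[OF refl])
    fix k assume k: "k \<in> {1..K}"
    have mu: "measure (distr M N X) (C k) = measure M {\<omega>\<in>space M. X \<omega> \<in> C k}"
      using measure_distr[OF X Cs[OF k]] by (simp add: vimage_def Int_def conj_commute)
    have mpos: "measure M {\<omega>\<in>space M. X \<omega> \<in> C k} \<noteq> 0" using pos[OF k] mu by simp
    show "(\<Sum>\<sigma>\<in>perms n. measure M (A k \<sigma>) * real (kendall n (sbar k) \<sigma>))
       = measure (distr M N X) (C k) * L_risk n (cond_dist M X Sig (C k)) (sbar k)"
      unfolding mu L_risk_def sum_distrib_left cond_dist_def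
      using mpos by (intro sum.cong refl) (simp add: A_def kendall_sym[of n \<open>sbar k\<close>])
  qed
  finally show ?thesis .
qed

lemma Lstar_props:
  "\<exists>\<sigma>\<in>perms n. L_risk n P \<sigma> = L_star n P" "\<sigma> \<in> perms n \<Longrightarrow> L_star n P \<le> L_risk n P \<sigma>"
proof -
  have fin: "finite (L_risk n P ` perms n)" using perms_finite by simp
  have ne: "L_risk n P ` perms n \<noteq> {}" using id_perms by blast
  show "\<exists>\<sigma>\<in>perms n. L_risk n P \<sigma> = L_star n P"
    using Min_in[OF fin ne] unfolding L_star_def by auto
  show "\<sigma> \<in> perms n \<Longrightarrow> L_star n P \<le> L_risk n P \<sigma>"
    unfolding L_star_def using fin by (intro Min_le) auto
qed

theorem proposition8:
  fixes M :: "'w measure" and N :: "'x measure"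
    and X :: "'w \<Rightarrow> 'x" and Sig :: "'w \<Rightarrow> (nat \<Rightarrow> nat)"
    and n K :: nat and C :: "nat \<Rightarrow> 'x set"
  assumes "prob_space M"
    and "X \<in> M \<rightarrow>\<^sub>M N"
    and "Sig \<in> M \<rightarrow>\<^sub>M count_space (perms n)"
    and "K \<ge> 1"
    and "\<And>k. k \<in> {1..K} \<Longrightarrow> C k \<in> sets N"
    and "\<And>k l. k \<in> {1..K} \<Longrightarrow> l \<in> {1..K} \<Longrightarrow> k \<noteq> l \<Longrightarrow> C k \<inter> C l = {}"
    and "(\<Union>k\<in>{1..K}. C k) = space N"
    and "\<And>k. k \<in> {1..K} \<Longrightarrow> measure (distr M N X) (C k) > 0"
  shows
    "({s \<in> rule_class n C K. \<forall>s'\<in>rule_class n C K. risk n M X Sig s \<le> risk n M X Sig s'}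
       = {piecewise_rule C K sbar | sbar.
            \<forall>k\<in>{1..K}. kemeny_median n (cond_dist M X Sig (C k)) (sbar k)})
     \<and> (\<exists>s\<in>rule_class n C K. risk n M X Sig s =
         (\<Sum>k\<in>{1..K}. measure (distr M N X) (C k) * L_star n (cond_dist M X Sig (C k))))
     \<and> (\<forall>s\<in>rule_class n C K.
         (\<Sum>k\<in>{1..K}. measure (distr M N X) (C k) * L_star n (cond_dist M X Sig (C k)))
           \<le> risk n M X Sig s)
     \<and> ((\<forall>k\<in>{1..K}. SST n (cond_dist M X Sig (C k))) \<longrightarrow>
       {s \<in> rule_class n C K. \<forall>s'\<in>rule_class n C K. risk n M X Sig s \<le> risk n M X Sig s'}
       = {piecewise_rule C K (\<lambda>k. sigma_star n (cond_dist M X Sig (C k)))})"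
proof -
  note a = assms
  define mu where "mu = (\<lambda>k. measure (distr M N X) (C k))"
  define P where "P = (\<lambda>k. cond_dist M X Sig (C k))"
  define F where "F = (\<lambda>sbar. \<Sum>k\<in>{1..K}. mu k * L_risk n (P k) (sbar k))"
  have RF: "risk n M X Sig (piecewise_rule C K sbar) = F sbar" for sbar
    unfolding F_def mu_def P_def by (rule risk_formula[OF a(1,2,3,5,6,7,8)])
  have mupos: "mu k > 0" if "k \<in> {1..K}" for k using a(8)[OF that] by (simp add: mu_def)
  have sum1: "sum (P k) (perms n) = 1" if k: "k \<in> {1..K}" for k
  proof -
    have "measure (distr M N X) (C k) = measure M {\<omega>\<in>space M. X \<omega> \<in> C k}"
      using measure_distr[OF a(2) a(5)[OF k]] by (simp add: vimage_def Int_def conj_commute)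
    thus ?thesis unfolding P_def using a(8)[OF k]
      by (intro cond_sum1[OF a(1,2,3) a(5)[OF k]]) simp
  qed
  have F_upd: "F (sbar(k0 := \<sigma>)) = F sbar - mu k0 * L_risk n (P k0) (sbar k0) + mu k0 * L_risk n (P k0) \<sigma>"
    if "k0 \<in> {1..K}" for sbar k0 \<sigma>
  proof -
    have "F (sbar(k0 := \<sigma>)) = mu k0 * L_risk n (P k0) \<sigma> +
       (\<Sum>k\<in>{1..K}-{k0}. mu k * L_risk n (P k) ((sbar(k0 := \<sigma>)) k))"
      unfolding F_def using that by (subst sum.remove[of _ k0]) auto
    also have "(\<Sum>k\<in>{1..K}-{k0}. mu k * L_risk n (P k) ((sbar(k0 := \<sigma>)) k))
       = (\<Sum>k\<in>{1..K}-{k0}. mu k * L_risk n (P k) (sbar k))" by (intro sum.cong) auto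
    also have "F sbar = mu k0 * L_risk n (P k0) (sbar k0) + (\<Sum>k\<in>{1..K}-{k0}. mu k * L_risk n (P k) (sbar k))"
      unfolding F_def using that by (subst sum.remove[of _ k0]) auto
    ultimately show ?thesis by (simp only: fun_upd_def)
  qed
  define Mins where "Mins = {s \<in> rule_class n C K. \<forall>s'\<in>rule_class n C K. risk n M X Sig s \<le> risk n M X Sig s'}"
  define Meds where "Meds = {piecewise_rule C K sbar | sbar. \<forall>k\<in>{1..K}. kemeny_median n (P k) (sbar k)}"
  have part1: "Mins = Meds"
  proof
    show "Mins \<subseteq> Meds"
    proof
      fix s assume "s \<in> Mins"
      then obtain sbar where s: "s = piecewise_rule C K sbar" "\<forall>k\<in>{1..K}. sbar k \<in> perms n"
        and mn: "\<forall>s'\<in>rule_class n C K. risk n M X Sig s \<le> risk n M X Sig s'"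
        unfolding Mins_def rule_class_def by blast
      have "kemeny_median n (P k0) (sbar k0)" if k0: "k0 \<in> {1..K}" for k0
        unfolding kemeny_median_def
      proof (intro conjI ballI)
        show "sbar k0 \<in> perms n" using s k0 by blast
        fix \<sigma> assume sp: "\<sigma> \<in> perms n"
        have "piecewise_rule C K (sbar(k0 := \<sigma>)) \<in> rule_class n C K"
        proof -
          have "\<forall>k\<in>{1..K}. (sbar(k0 := \<sigma>)) k \<in> perms n" using s(2) sp by simp
          thus ?thesis unfolding rule_class_def
            by (intro CollectI exI[of _ "sbar(k0 := \<sigma>)"] conjI refl)
        qed
        hence "risk n M X Sig s \<le> risk n M X Sig (piecewise_rule C K (sbar(k0 := \<sigma>)))"
          using mn by blast
        hence "F sbar \<le> F (sbar(k0 := \<sigma>))" by (simp only: s(1) RF)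
        hence "mu k0 * L_risk n (P k0) (sbar k0) \<le> mu k0 * L_risk n (P k0) \<sigma>"
          using F_upd[OF k0] by simp
        thus "L_risk n (P k0) (sbar k0) \<le> L_risk n (P k0) \<sigma>" using mupos[OF k0] by simp
      qed
      thus "s \<in> Meds" unfolding Meds_def using s(1) by blast
    qed
    show "Meds \<subseteq> Mins"
    proof
      fix s assume "s \<in> Meds"
      then obtain sbar where s: "s = piecewise_rule C K sbar"
        and md: "\<forall>k\<in>{1..K}. kemeny_median n (P k) (sbar k)" unfolding Meds_def by blast
      have "\<forall>k\<in>{1..K}. sbar k \<in> perms n" using md by (simp add: kemeny_median_def)
      hence "s \<in> rule_class n C K" unfolding rule_class_def s
        by (intro CollectI exI[of _ sbar] conjI refl)
      moreover have "risk n M X Sig s \<le> risk n M X Sig s'" if s'in: "s' \<in> rule_class n C K" for s'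
      proof -
        obtain sb' where s': "s' = piecewise_rule C K sb'" "\<forall>k\<in>{1..K}. sb' k \<in> perms n"
          using s'in unfolding rule_class_def by blast
        have le: "L_risk n (P k) (sbar k) \<le> L_risk n (P k) (sb' k)" if k: "k\<in>{1..K}" for k
          using md s'(2) k unfolding kemeny_median_def by blast
        have "F sbar \<le> F sb'" unfolding F_def
        proof (rule sum_mono)
          fix k assume k: "k \<in> {1..K}"
          show "mu k * L_risk n (P k) (sbar k) \<le> mu k * L_risk n (P k) (sb' k)"
            using le[OF k] mupos[OF k] by (simp add: mult_left_mono)
        qed
        thus ?thesis using RF s s'(1) by simp
      qed
      ultimately show "s \<in> Mins" unfolding Mins_def by blast
    qed
  qed
  define LS where "LS = (\<Sum>k\<in>{1..K}. mu k * L_star n (P k))"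
  have part2: "\<exists>s\<in>rule_class n C K. risk n M X Sig s = LS"
  proof -
    define med where "med = (\<lambda>k. SOME \<sigma>. \<sigma> \<in> perms n \<and> L_risk n (P k) \<sigma> = L_star n (P k))"
    have med: "med k \<in> perms n \<and> L_risk n (P k) (med k) = L_star n (P k)" for k
    proof -
      have ex: "\<exists>\<sigma>. \<sigma> \<in> perms n \<and> L_risk n (P k) \<sigma> = L_star n (P k)"
        using Lstar_props(1)[of n "P k"] by blast
      show ?thesis unfolding med_def by (rule someI_ex[OF ex])
    qed
    have "\<forall>k\<in>{1..K}. med k \<in> perms n" using med by simp
    hence "piecewise_rule C K med \<in> rule_class n C K" unfolding rule_class_def
      by (intro CollectI exI[of _ med] conjI refl)
    moreover have "F med = LS" unfolding F_def LS_def using med by simp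
    ultimately show ?thesis by (intro bexI[of _ "piecewise_rule C K med"]) (simp_all only: RF)
  qed
  have part3: "\<forall>s\<in>rule_class n C K. LS \<le> risk n M X Sig s"
  proof
    fix s assume "s \<in> rule_class n C K"
    then obtain sb where s: "s = piecewise_rule C K sb" "\<forall>k\<in>{1..K}. sb k \<in> perms n"
      unfolding rule_class_def by blast
    have "LS \<le> F sb" unfolding LS_def F_def
    proof (rule sum_mono)
      fix k assume k: "k \<in> {1..K}"
      have "L_star n (P k) \<le> L_risk n (P k) (sb k)" using s(2) k Lstar_props(2) by blast
      thus "mu k * L_star n (P k) \<le> mu k * L_risk n (P k) (sb k)"
        using mupos[OF k] by (simp add: mult_left_mono)
    qed
    thus "LS \<le> risk n M X Sig s" using RF s(1) by simp
  qed
  have part4: "Mins = {piecewise_rule C K (\<lambda>k. sigma_star n (P k))}"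
    if sst: "\<forall>k\<in>{1..K}. SST n (P k)"
  proof -
    have U: "\<exists>!\<sigma>. kemeny_median n (P k) \<sigma>" if "k \<in> {1..K}" for k
      using kemeny_unique[OF sum1[OF that]] sst that by blast
    have ss: "kemeny_median n (P k) (sigma_star n (P k))" if "k \<in> {1..K}" for k
      unfolding sigma_star_def using theI'[OF U[OF that]] .
    have "Meds = {piecewise_rule C K (\<lambda>k. sigma_star n (P k))}"
    proof
      show "Meds \<subseteq> {piecewise_rule C K (\<lambda>k. sigma_star n (P k))}"
      proof
        fix s assume "s \<in> Meds"
        then obtain sbar where s: "s = piecewise_rule C K sbar"
          and md: "\<forall>k\<in>{1..K}. kemeny_median n (P k) (sbar k)" unfolding Meds_def by blast
        have "sbar k = sigma_star n (P k)" if "k \<in> {1..K}" for k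
        proof -
          have "kemeny_median n (P k) (sbar k)" using md that by blast
          thus ?thesis using U[OF that] ss[OF that] by blast
        qed
        hence "s = piecewise_rule C K (\<lambda>k. sigma_star n (P k))"
          unfolding s by (intro pw_cong[of K C, OF a(6)]) auto
        thus "s \<in> {piecewise_rule C K (\<lambda>k. sigma_star n (P k))}" by simp
      qed
      show "{piecewise_rule C K (\<lambda>k. sigma_star n (P k))} \<subseteq> Meds"
        unfolding Meds_def using ss by blast
    qed
    thus ?thesis using part1 by simp
  qed
  show ?thesis
  proof (intro conjI impI)
    show "{s \<in> rule_class n C K. \<forall>s'\<in>rule_class n C K. risk n M X Sig s \<le> risk n M X Sig s'}
       = {piecewise_rule C K sbar | sbar.
            \<forall>k\<in>{1..K}. kemeny_median n (cond_dist M X Sig (C k)) (sbar k)}"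
      using part1 unfolding Mins_def Meds_def P_def .
    show "\<exists>s\<in>rule_class n C K. risk n M X Sig s =
         (\<Sum>k\<in>{1..K}. measure (distr M N X) (C k) * L_star n (cond_dist M X Sig (C k)))"
      using part2 unfolding LS_def mu_def P_def .
    show "\<forall>s\<in>rule_class n C K.
         (\<Sum>k\<in>{1..K}. measure (distr M N X) (C k) * L_star n (cond_dist M X Sig (C k)))
           \<le> risk n M X Sig s"
      using part3 unfolding LS_def mu_def P_def .
    assume h: "\<forall>k\<in>{1..K}. SST n (cond_dist M X Sig (C k))"
    show "{s \<in> rule_class n C K. \<forall>s'\<in>rule_class n C K. risk n M X Sig s \<le> risk n M X Sig s'}
       = {piecewise_rule C K (\<lambda>k. sigma_star n (cond_dist M X Sig (C k)))}"
      using part4[unfolded P_def, OF h] unfolding Mins_def P_def .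
  qed
qed

end
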